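(* For any $n\in\mathbb{N}$ there exists $x\in I$ such that $n\,\tilde{\mid}\,x$.
   Context: $\mathbb{N}=\{1,2,3,\dots\}$; $\beta\mathbb{N}$ is the set of ultrafilters on $\mathbb{N}$, with each $n\in\mathbb{N}$ identified with the principal ultrafilter at $n$. For $A\subseteq\mathbb{N}$, $\overline{A}=\{x\in\beta\mathbb{N}:A\in x\}$. $P$ is the set of primes, $L_0=\{1\}$, $L_k=\{a_1\cdots a_k:a_i\in P\}$. $I=\bigcap_{i=0}^\infty\overline{\mathbb{N}\setminus L_i}$ (ultrafilters containing none of the $L_i$). For $x,y\in\beta\mathbb{N}$, $x\,\tilde{\mid}\,y$ iff for every $A\in x$ the set $\{k\in\mathbb{N}:\exists a\in A,\ a\mid k\}$ belongs to $y$. *)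

theory Defs
  imports "HOL-Computational_Algebra.Primes"
begin

text \<open>The paper's N = {1,2,3,...}, modelled inside type nat.\<close>
definition Npos :: "nat set" where "Npos = {n. n \<ge> 1}"

definition ultrafilter_N :: "nat set set \<Rightarrow> bool" where
  "ultrafilter_N x \<longleftrightarrow>
     (\<forall>A\<in>x. A \<subseteq> Npos) \<and> Npos \<in> x \<and> {} \<notin> x \<and>
     (\<forall>A\<in>x. \<forall>B\<in>x. A \<inter> B \<in> x) \<and>
     (\<forall>A\<in>x. \<forall>B. A \<subseteq> B \<and> B \<subseteq> Npos \<longrightarrow> B \<in> x) \<and>
     (\<forall>A. A \<subseteq> Npos \<longrightarrow> A \<in> x \<or> Npos - A \<in> x)"

definition betaN :: "nat set set set" where
  "betaN = {x. ultrafilter_N x}"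

text \<open>Principal ultrafilter at n (identification of n with an element of beta N).\<close>
definition principal :: "nat \<Rightarrow> nat set set" where
  "principal n = {A. A \<subseteq> Npos \<and> n \<in> A}"

definition cl :: "nat set \<Rightarrow> nat set set set" where
  "cl A = {x \<in> betaN. A \<in> x}"

definition L :: "nat \<Rightarrow> nat set" where
  "L k = {prod_list ps | ps. length ps = k \<and> (\<forall>p\<in>set ps. prime p)}"

definition Ifam :: "nat set set set" where
  "Ifam = (\<Inter>i. cl (Npos - L i))"

definition udvd :: "nat set set \<Rightarrow> nat set set \<Rightarrow> bool" where
  "udvd x y \<longleftrightarrow> (\<forall>A\<in>x. {k \<in> Npos. \<exists>a\<in>A. a dvd k} \<in> y)"

end

theory Submission
  imports Defs
begin

definition isF :: "nat set set \<Rightarrow> bool" where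
  "isF F \<longleftrightarrow> (\<forall>A\<in>F. A \<subseteq> Npos) \<and> Npos \<in> F \<and> {} \<notin> F \<and>
     (\<forall>A\<in>F. \<forall>B\<in>F. A \<inter> B \<in> F) \<and>
     (\<forall>A\<in>F. \<forall>B. A \<subseteq> B \<and> B \<subseteq> Npos \<longrightarrow> B \<in> F)"

lemma ultra_exists:
  fixes B :: "nat \<Rightarrow> nat set"
  assumes sub: "\<And>m. B m \<subseteq> Npos" and ne: "\<And>m. B m \<noteq> {}"
    and dec: "\<And>m m'. m \<le> m' \<Longrightarrow> B m' \<subseteq> B m"
  shows "\<exists>x. ultrafilter_N x \<and> (\<forall>m. B m \<in> x)"
proof -
  define F0 where "F0 = {A. A \<subseteq> Npos \<and> (\<exists>m. B m \<subseteq> A)}"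
  have F0: "isF F0"
    unfolding isF_def F0_def
  proof (intro conjI ballI allI impI)
    show "Npos \<in> {A. A \<subseteq> Npos \<and> (\<exists>m. B m \<subseteq> A)}" using sub by auto
    show "{} \<notin> {A. A \<subseteq> Npos \<and> (\<exists>m. B m \<subseteq> A)}" using ne by auto
  next
    fix X Y assume "X \<in> {A. A \<subseteq> Npos \<and> (\<exists>m. B m \<subseteq> A)}" "Y \<in> {A. A \<subseteq> Npos \<and> (\<exists>m. B m \<subseteq> A)}"
    then obtain m m' where "X \<subseteq> Npos" "B m \<subseteq> X" "B m' \<subseteq> Y" by auto
    moreover have "B (max m m') \<subseteq> B m" "B (max m m') \<subseteq> B m'" using dec by auto
    ultimately show "X \<inter> Y \<in> {A. A \<subseteq> Npos \<and> (\<exists>m. B m \<subseteq> A)}" by blast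
  qed auto
  define S where "S = {F. isF F \<and> F0 \<subseteq> F}"
  have "\<forall>C\<in>chains S. \<exists>U\<in>S. \<forall>X\<in>C. X \<subseteq> U"
  proof
    fix C assume C: "C \<in> chains S"
    show "\<exists>U\<in>S. \<forall>X\<in>C. X \<subseteq> U"
    proof (cases "C = {}")
      case True then show ?thesis using F0 unfolding S_def by auto
    next
      case False
      have CS: "C \<subseteq> S" and ch: "\<And>X Y. X \<in> C \<Longrightarrow> Y \<in> C \<Longrightarrow> X \<subseteq> Y \<or> Y \<subseteq> X"
        using C unfolding chains_def chain_subset_def by auto
      have "isF (\<Union>C)"
        unfolding isF_def
      proof (intro conjI ballI allI impI)
        fix X Y assume "X \<in> \<Union>C" "Y \<in> \<Union>C"
        then obtain F G where FG: "F \<in> C" "G \<in> C" "X \<in> F" "Y \<in> G" by auto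
        show "X \<inter> Y \<in> \<Union>C"
        proof (cases "F \<subseteq> G")
          case True
          then show ?thesis using FG CS unfolding S_def isF_def by blast
        next
          case False
          then have "G \<subseteq> F" using ch FG by blast
          then show ?thesis using FG CS unfolding S_def isF_def by blast
        qed
      next
        fix X Y assume "X \<in> \<Union>C" "X \<subseteq> Y \<and> Y \<subseteq> Npos"
        then show "Y \<in> \<Union>C" using CS unfolding S_def isF_def by blast
      next
        fix X assume "X \<in> \<Union>C" then show "X \<subseteq> Npos" using CS unfolding S_def isF_def by blast
      next
        show "Npos \<in> \<Union>C" using CS False unfolding S_def isF_def by blast
        show "{} \<notin> \<Union>C" using CS unfolding S_def isF_def by blast
      qed
      moreover have "F0 \<subseteq> \<Union>C" using CS False unfolding S_def by blast
      ultimately show ?thesis unfolding S_def by blast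
    qed
  qed
  from Zorn_Lemma2[OF this] obtain U where U: "U \<in> S" and mx: "\<And>X. X \<in> S \<Longrightarrow> U \<subseteq> X \<Longrightarrow> X = U"
    by blast
  have iU: "isF U" and F0U: "F0 \<subseteq> U" using U unfolding S_def by auto
  have compl: "A \<in> U \<or> Npos - A \<in> U" if A: "A \<subseteq> Npos" for A
  proof (cases "\<forall>X\<in>U. A \<inter> X \<noteq> {}")
    case True
    define U' where "U' = {Y. Y \<subseteq> Npos \<and> (\<exists>X\<in>U. A \<inter> X \<subseteq> Y)}"
    have "isF U'"
      unfolding isF_def U'_def
    proof (intro conjI ballI allI impI)
      show "Npos \<in> {Y. Y \<subseteq> Npos \<and> (\<exists>X\<in>U. A \<inter> X \<subseteq> Y)}" using iU unfolding isF_def by blast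
      show "{} \<notin> {Y. Y \<subseteq> Npos \<and> (\<exists>X\<in>U. A \<inter> X \<subseteq> Y)}" using True by blast
    next
      fix X Y assume "X \<in> {Y. Y \<subseteq> Npos \<and> (\<exists>X\<in>U. A \<inter> X \<subseteq> Y)}" "Y \<in> {Y. Y \<subseteq> Npos \<and> (\<exists>X\<in>U. A \<inter> X \<subseteq> Y)}"
      then obtain P Q where "X \<subseteq> Npos" "P \<in> U" "Q \<in> U" "A \<inter> P \<subseteq> X" "A \<inter> Q \<subseteq> Y" by auto
      moreover have "P \<inter> Q \<in> U" using iU \<open>P \<in> U\<close> \<open>Q \<in> U\<close> unfolding isF_def by blast
      moreover have "A \<inter> (P \<inter> Q) \<subseteq> X \<inter> Y" using calculation by blast
      ultimately show "X \<inter> Y \<in> {Y. Y \<subseteq> Npos \<and> (\<exists>X\<in>U. A \<inter> X \<subseteq> Y)}"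
        by (intro CollectI conjI bexI[of _ "P \<inter> Q"]) auto
    qed auto
    moreover have "U \<subseteq> U'"
    proof
      fix Y assume "Y \<in> U"
      moreover have "Y \<subseteq> Npos" using iU \<open>Y \<in> U\<close> unfolding isF_def by blast
      ultimately show "Y \<in> U'" unfolding U'_def by blast
    qed
    ultimately have "U' \<in> S" using F0U unfolding S_def by blast
    then have "U' = U" using mx \<open>U \<subseteq> U'\<close> by blast
    moreover have "A \<in> U'" unfolding U'_def using A iU unfolding isF_def by blast
    ultimately show ?thesis by simp
  next
    case False
    then obtain X where "X \<in> U" "A \<inter> X = {}" by blast
    have "X \<subseteq> Npos" using iU \<open>X \<in> U\<close> unfolding isF_def by blast
    then have "X \<subseteq> Npos - A" using \<open>A \<inter> X = {}\<close> by blast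
    moreover have "\<forall>A\<in>U. \<forall>B. A \<subseteq> B \<and> B \<subseteq> Npos \<longrightarrow> B \<in> U" using iU unfolding isF_def by blast
    ultimately show ?thesis using \<open>X \<in> U\<close> by blast
  qed
  have c6: "\<forall>A. A \<subseteq> Npos \<longrightarrow> A \<in> U \<or> Npos - A \<in> U" using compl by blast
  have "ultrafilter_N U" unfolding ultrafilter_N_def
    using iU[unfolded isF_def] c6 by (elim conjE, intro conjI) assumption+
  moreover have "\<forall>m. B m \<in> U"
  proof
    fix m have "B m \<in> F0" unfolding F0_def using sub by blast
    then show "B m \<in> U" using F0U by blast
  qed
  ultimately show ?thesis by blast
qed

lemma L_size: "k \<in> L i \<Longrightarrow> i = size (prime_factorization k)"
proof -
  assume "k \<in> L i"
  then obtain ps where ps: "k = prod_list ps" "length ps = i" "\<forall>p\<in>set ps. prime p"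
    unfolding L_def by blast
  have "prime_factorization (prod_mset (mset ps)) = mset ps"
    by (rule prime_factorization_prod_mset_primes) (use ps in auto)
  then show ?thesis using ps by (simp add: prod_mset_prod_list)
qed

theorem corollary3p8:
  fixes n :: nat
  assumes "n \<in> Npos"
  shows "\<exists>x\<in>Ifam. udvd (principal n) x"
proof -
  define B where "B m = {k \<in> Npos. n dvd k \<and> (\<forall>i\<le>m. k \<notin> L i)}" for m
  have n0: "n \<noteq> 0" using assms unfolding Npos_def by auto
  have ne: "B m \<noteq> {}" for m
  proof -
    define k where "k = n * 2 ^ (m + 1)"
    have k0: "k \<noteq> 0" using n0 unfolding k_def by simp
    have "size (prime_factorization k) = size (prime_factorization n) + (m + 1)"
      unfolding k_def using n0
      by (simp add: prime_factorization_mult prime_factorization_prime_power prime_factorization_prime)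
    then have "k \<notin> L i" if "i \<le> m" for i using that L_size by fastforce
    moreover have "k \<in> Npos" using k0 unfolding Npos_def by simp
    ultimately have "k \<in> B m" unfolding B_def k_def by auto
    then show ?thesis by blast
  qed
  have sub: "B m \<subseteq> Npos" for m unfolding B_def by auto
  have dec: "m \<le> m' \<Longrightarrow> B m' \<subseteq> B m" for m m' unfolding B_def by auto
  obtain x where x: "ultrafilter_N x" "\<forall>m. B m \<in> x" using ultra_exists[of B, OF sub ne dec] by blast
  have up: "\<And>A C. A \<in> x \<Longrightarrow> A \<subseteq> C \<Longrightarrow> C \<subseteq> Npos \<Longrightarrow> C \<in> x"
    using x(1) unfolding ultrafilter_N_def by blast
  have "x \<in> Ifam"
    unfolding Ifam_def cl_def betaN_def
  proof (intro InterI, clarsimp)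
    fix i
    have "B i \<subseteq> Npos - L i" unfolding B_def by auto
    then show "ultrafilter_N x \<and> Npos - L i \<in> x" using up x by blast
  qed
  moreover have "udvd (principal n) x"
    unfolding udvd_def principal_def
  proof clarsimp
    fix A assume "A \<subseteq> Npos" "n \<in> A"
    have "B 0 \<subseteq> {k \<in> Npos. \<exists>a\<in>A. a dvd k}" unfolding B_def using \<open>n \<in> A\<close> by auto
    then show "{k \<in> Npos. \<exists>a\<in>A. a dvd k} \<in> x" using up x by blast
  qed
  ultimately show ?thesis by blast
qed

end
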